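(* Let $\mathcal{H}$ be a finite set of hypotheses, $\mathcal{T}$ a finite set of tests, $\mathcal{O}$ a finite set of outcomes, each $h\in\mathcal{H}$ a function $h:\mathcal{T}\to\mathcal{O}$, and $\mathcal{R}$ a finite nonempty collection of decision regions $r\subseteq\mathcal{H}$ with $\bigcup_{r\in\mathcal{R}} r=\mathcal{H}$. Let $\mathcal{G}$ be the set of subregions, let $$k=\min\Big(\max_{h\in\mathcal{H}}|\{r\in\mathcal{R}: h\in r\}|,\ \max_{r\in\mathcal{R}}|\{g\in\mathcal{G}: g\subseteq r\}|\Big)+1,$$ and let $\mathcal{E}$ be the set of all multisets $e$ of exactly $k$ subregions (repetitions allowed) such that there is no $r\in\mathcal{R}$ with $g\subseteq r$ for every $g\in e$. For a set of test–outcome pairs $\mathcal{S}\subseteq\mathcal{T}\times\mathcal{O}$, let $\mathcal{V}(\mathcal{S})=\{h\in\mathcal{H}: h(t)=o \text{ for all }(t,o)\in\mathcal{S}\}$ and let $\mathcal{E}(\mathcal{S})$ be the set of hyperedges $e\in\mathcal{E}$ such that every subregion $g\in e$ contains at least one hypothesis of $\mathcal{V}(\mathcal{S})$. Then for every $\mathcal{S}\subseteq\mathcal{T}\times\mathcal{O}$, $$\mathcal{E}(\mathcal{S})=\emptyset \iff \exists\, r\in\mathcal{R}:\ \mathcal{V}(\mathcal{S})\subseteq r.$$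
   Context: Subregions: hypotheses $h,h'$ are grouped into the same subregion iff they belong to exactly the same decision regions (for all $r\in\mathcal{R}$: $h\in r\Leftrightarrow h'\in r$); $\mathcal{G}$ is the set of these equivalence classes, and for $g\in\mathcal{G}$, $r\in\mathcal{R}$ we write $g\subseteq r$ if every hypothesis of $g$ lies in $r$. The hyperedges $\mathcal{E}$ form the "splitting hypergraph" on the node set $\mathcal{G}$; a hyperedge is "cut" by evidence $\mathcal{S}$ when it is not in $\mathcal{E}(\mathcal{S})$. *)

theory Defs
  imports Main "HOL-Library.Multiset"
begin

text \<open>Hypotheses are elements of an abstract type; ev h t is the outcome h(t).\<close>

definition subregions :: "'h set \<Rightarrow> 'h set set \<Rightarrow> 'h set set" where
  "subregions H R = {{h'\<in>H. \<forall>r\<in>R. (h \<in> r \<longleftrightarrow> h' \<in> r)} | h. h \<in> H}"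

definition hyper_k :: "'h set \<Rightarrow> 'h set set \<Rightarrow> nat" where
  "hyper_k H R = min (Max {card {r\<in>R. h \<in> r} | h. h \<in> H})
                     (Max {card {g\<in>subregions H R. g \<subseteq> r} | r. r \<in> R}) + 1"

definition hyperedges :: "'h set \<Rightarrow> 'h set set \<Rightarrow> 'h set multiset set" where
  "hyperedges H R = {e. size e = hyper_k H R \<and> set_mset e \<subseteq> subregions H R
                        \<and> \<not> (\<exists>r\<in>R. \<forall>g\<in>#e. g \<subseteq> r)}"

definition version_space :: "'h set \<Rightarrow> ('h \<Rightarrow> 't \<Rightarrow> 'o) \<Rightarrow> ('t \<times> 'o) set \<Rightarrow> 'h set" where
  "version_space H ev S = {h\<in>H. \<forall>(t,out)\<in>S. ev h t = out}"

definition remaining_edges ::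
  "'h set \<Rightarrow> 'h set set \<Rightarrow> ('h \<Rightarrow> 't \<Rightarrow> 'o) \<Rightarrow> ('t \<times> 'o) set \<Rightarrow> 'h set multiset set" where
  "remaining_edges H R ev S =
     {e\<in>hyperedges H R. \<forall>g\<in>#e. g \<inter> version_space H ev S \<noteq> {}}"

end

theory Submission
  imports Defs
begin

theorem theorem1:
  fixes H :: "'h set" and T :: "'t set" and Out :: "'o set"
    and ev :: "'h \<Rightarrow> 't \<Rightarrow> 'o" and R :: "'h set set"
  assumes "finite H" and "finite T" and "finite Out"
    and "\<forall>h\<in>H. \<forall>t\<in>T. ev h t \<in> Out"
    and "finite R" and "R \<noteq> {}" and "\<forall>r\<in>R. r \<subseteq> H" and "\<Union>R = H"
    and "S \<subseteq> T \<times> Out"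
  shows "remaining_edges H R ev S = {} \<longleftrightarrow> (\<exists>r\<in>R. version_space H ev S \<subseteq> r)"
proof -
  define cls where "cls h = {h'\<in>H. \<forall>r\<in>R. (h \<in> r \<longleftrightarrow> h' \<in> r)}" for h
  define V where "V = version_space H ev S"
  define G where "G = subregions H R"
  have G_eq: "G = cls ` H" unfolding G_def subregions_def cls_def by auto
  have VH: "V \<subseteq> H" unfolding V_def version_space_def by auto
  have self: "h \<in> cls h" if "h \<in> H" for h using that unfolding cls_def by auto
  have mem: "h' \<in> r \<longleftrightarrow> h \<in> r" if "h' \<in> cls h" "r \<in> R" for h h' r
    using that unfolding cls_def by auto
  have sub_iff: "cls h \<subseteq> r \<longleftrightarrow> h \<in> r" if "h \<in> H" "r \<in> R" for h r
    using that self mem by blast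
  have finG: "finite G" using G_eq assms(1) by simp
  have "remaining_edges H R ev S = {} \<longleftrightarrow> (\<exists>r\<in>R. V \<subseteq> r)"
  proof
    assume E: "remaining_edges H R ev S = {}"
    show "\<exists>r\<in>R. V \<subseteq> r"
    proof (rule ccontr)
      assume NV: "\<not> (\<exists>r\<in>R. V \<subseteq> r)"
      define GV where "GV = {g\<in>G. g \<inter> V \<noteq> {}}"
      have GVG: "GV \<subseteq> G" unfolding GV_def by auto
      have finGV: "finite GV" using finG GVG finite_subset by blast
      have wit: "\<exists>g\<in>GV. \<not> g \<subseteq> r" if "r \<in> R" for r
      proof -
        have "\<not> V \<subseteq> r" using NV that by blast
        then obtain v where v: "v \<in> V" "v \<notin> r" by (meson subsetI)
        have vH: "v \<in> H" using v VH by (rule_tac subsetD)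
        have "cls v \<in> G" unfolding G_eq using vH by (rule imageI)
        moreover have "v \<in> cls v \<inter> V" using self[OF vH] v by (rule_tac IntI)
        ultimately have "cls v \<in> GV" unfolding GV_def by blast
        moreover have "\<not> cls v \<subseteq> r" using sub_iff[OF vH that] v by simp
        ultimately have "cls v \<in> GV \<and> \<not> cls v \<subseteq> r" by simp
        then show ?thesis by blast
      qed
      define A where "A = Max {card {r\<in>R. h \<in> r} | h. h \<in> H}"
      define B where "B = Max {card {g\<in>subregions H R. g \<subseteq> r} | r. r \<in> R}"
      have k: "hyper_k H R = min A B + 1" unfolding hyper_k_def A_def B_def by simp
      obtain v0 where v0: "v0 \<in> V" using NV assms(6) by blast
      have v0H: "v0 \<in> H" using v0 VH by auto
      have FA: "\<exists>F. F \<subseteq> GV \<and> card F \<le> A + 1 \<and> \<not> (\<exists>r\<in>R. \<forall>g\<in>F. g \<subseteq> r)"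
      proof -
        have "\<forall>r\<in>R. \<exists>g. g \<in> GV \<and> \<not> g \<subseteq> r" using wit by (meson bexE)
        then have "\<exists>f. \<forall>r\<in>R. f r \<in> GV \<and> \<not> f r \<subseteq> r" by (rule bchoice)
        then obtain f where f: "\<forall>r\<in>R. f r \<in> GV \<and> \<not> f r \<subseteq> r" by (elim exE)
        define Rv where "Rv = {r\<in>R. v0 \<in> r}"
        have finRv: "finite Rv" using assms(5) unfolding Rv_def by auto
        have "card Rv \<le> A" unfolding A_def Rv_def
          by (rule Max_ge) (use assms(1) v0H in auto)
        define F where "F = insert (cls v0) (f ` Rv)"
        have "card F \<le> card (f ` Rv) + 1" unfolding F_def
          using finRv by (simp add: card_insert_le_m1 card_insert_if)
        also have "\<dots> \<le> card Rv + 1" using card_image_le finRv by auto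
        finally have c: "card F \<le> A + 1" using \<open>card Rv \<le> A\<close> by linarith
        have "cls v0 \<in> GV" using v0 v0H self unfolding GV_def G_eq by auto
        moreover have "f ` Rv \<subseteq> GV" using f unfolding Rv_def by auto
        ultimately have s: "F \<subseteq> GV" unfolding F_def by auto
        have n: "\<not> (\<exists>r\<in>R. \<forall>g\<in>F. g \<subseteq> r)"
        proof
          assume "\<exists>r\<in>R. \<forall>g\<in>F. g \<subseteq> r"
          then obtain r where r: "r \<in> R" "\<forall>g\<in>F. g \<subseteq> r" by blast
          then have "cls v0 \<subseteq> r" unfolding F_def by auto
          then have "r \<in> Rv" using sub_iff v0H r unfolding Rv_def by auto
          then have "f r \<subseteq> r" using r unfolding F_def by auto
          then show False using f r by auto
        qed
        show ?thesis using s c n by blast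
      qed
      have FB: "\<exists>F. F \<subseteq> GV \<and> card F \<le> B + 1 \<and> \<not> (\<exists>r\<in>R. \<forall>g\<in>F. g \<subseteq> r)"
      proof (cases "card GV \<le> B + 1")
        case True
        have "\<not> (\<exists>r\<in>R. \<forall>g\<in>GV. g \<subseteq> r)" using wit by blast
        then show ?thesis using True by blast
      next
        case False
        obtain F where F: "F \<subseteq> GV" "card F = B + 1"
          using obtain_subset_with_card_n[of "B+1" GV] False by auto
        have "\<not> (\<exists>r\<in>R. \<forall>g\<in>F. g \<subseteq> r)"
        proof
          assume "\<exists>r\<in>R. \<forall>g\<in>F. g \<subseteq> r"
          then obtain r where r: "r \<in> R" "\<forall>g\<in>F. g \<subseteq> r" by blast
          have "F \<subseteq> {g\<in>subregions H R. g \<subseteq> r}" using r F GVG G_def by auto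
          then have "card F \<le> card {g\<in>subregions H R. g \<subseteq> r}"
            by (rule card_mono[rotated]) (use finG G_def in auto)
          also have "\<dots> \<le> B" unfolding B_def
            by (rule Max_ge) (use assms(5) r in auto)
          finally show False using F by simp
        qed
        then show ?thesis using F by auto
      qed
      obtain F where F: "F \<subseteq> GV" "card F \<le> hyper_k H R" "\<not> (\<exists>r\<in>R. \<forall>g\<in>F. g \<subseteq> r)"
        using FA FB k by (cases "A \<le> B") (auto simp: min_def)
      have finF: "finite F" using F(1) finGV finite_subset by blast
      obtain g0 where g0: "g0 \<in> F" using F(3) assms(6) by blast
      define e where "e = mset_set F + replicate_mset (hyper_k H R - card F) g0"
      have se: "set_mset e = F" unfolding e_def using finF g0 by auto
      have sz: "size e = hyper_k H R" unfolding e_def using finF F(2) by simp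
      have "e \<in> remaining_edges H R ev S"
        unfolding remaining_edges_def hyperedges_def
        using se sz F(1,3) GVG unfolding GV_def G_def V_def by auto
      then show False using E by auto
    qed
  next
    assume "\<exists>r\<in>R. V \<subseteq> r"
    then obtain r where r: "r \<in> R" "V \<subseteq> r" by blast
    show "remaining_edges H R ev S = {}"
    proof (rule ccontr)
      assume "remaining_edges H R ev S \<noteq> {}"
      then obtain e where e: "e \<in> hyperedges H R" "\<forall>g\<in>#e. g \<inter> V \<noteq> {}"
        unfolding remaining_edges_def V_def by auto
      have "\<forall>g\<in>#e. g \<subseteq> r"
      proof
        fix g assume g: "g \<in># e"
        then have "g \<in> G" using e(1) unfolding hyperedges_def G_def by auto
        then obtain h where h: "h \<in> H" "g = cls h" using G_eq by auto
        obtain v where v: "v \<in> g" "v \<in> V" using e(2) g by auto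
        have "v \<in> r" using v r by auto
        then have "h \<in> r" using mem v h r by auto
        then show "g \<subseteq> r" using sub_iff h r by auto
      qed
      then show False using e(1) r unfolding hyperedges_def by blast
    qed
  qed
  then show ?thesis unfolding V_def .
qed

end
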